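(* Let $d\ge 2$ and let $t:\mathbb{R}^{d-1}\to\mathbb{R}$ be continuous. Then the map $h:\mathbb{R}^d\to\mathbb{R}^d$, $h(x)=(x_1,\dots,x_{d-1},x_d+t(x_1,\dots,x_{d-1}))$ is compactly approximated by $\mathcal{NN}_{\mathrm{LReLU}}(d,d,d)$: for every compact $K\subset\mathbb{R}^d$ and $\epsilon>0$ there is $g\in\mathcal{NN}_{\mathrm{LReLU}}(d,d,d)$ with $\sup_{x\in K}\|h(x)-g(x)\|_\infty<\epsilon$.
   Context: For $\beta\in\mathbb{R}$, $\mathrm{LReLU}_\beta(x)=x$ if $x\ge 0$ and $\beta x$ if $x<0$, applied componentwise to vectors. $\mathcal{NN}_{\mathrm{LReLU}}(d,d,d)$ is the set of all maps $W_{N+1}\circ\mathrm{LReLU}_{\beta_N}\circ W_N\circ\cdots\circ\mathrm{LReLU}_{\beta_1}\circ W_1:\mathbb{R}^d\to\mathbb{R}^d$ with $N\in\mathbb{N}_0$, $\beta_i\in\mathbb{R}$, integers $1\le d_1,\dots,d_N\le d$, $d_0=d_{N+1}=d$, and $W_i:\mathbb{R}^{d_{i-1}}\to\mathbb{R}^{d_i}$ affine. *)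

theory Defs
  imports "HOL-Analysis.Analysis"
begin

text \<open>Vectors of R^n are represented as functions nat => real whose entries
  at indices i >= n are zero. The topology on nat => real is the product topology
  (Function_Topology), which on the subspace of such vectors is the Euclidean one.\<close>

definition rvec :: "nat \<Rightarrow> (nat \<Rightarrow> real) set" where
  "rvec n = {x. \<forall>i\<ge>n. x i = 0}"

definition affine_map :: "nat \<Rightarrow> nat \<Rightarrow> (nat \<Rightarrow> nat \<Rightarrow> real) \<Rightarrow> (nat \<Rightarrow> real)
    \<Rightarrow> (nat \<Rightarrow> real) \<Rightarrow> (nat \<Rightarrow> real)" where
  "affine_map m n A b = (\<lambda>x i. if i < n then (\<Sum>j<m. A i j * x j) + b i else 0)"

definition LReLU :: "real \<Rightarrow> real \<Rightarrow> real" where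
  "LReLU \<beta> x = (if x \<ge> 0 then x else \<beta> * x)"

definition LReLU_vec :: "real \<Rightarrow> (nat \<Rightarrow> real) \<Rightarrow> (nat \<Rightarrow> real)" where
  "LReLU_vec \<beta> x = (\<lambda>i. LReLU \<beta> (x i))"

text \<open>nn_pre d k f: f = LReLU_{beta_N} o W_N o ... o LReLU_{beta_1} o W_1 with input
  dimension d, hidden widths 1 <= d_i <= d, and last width d_N = k (N = 0 gives identity, k = d).\<close>
inductive nn_pre :: "nat \<Rightarrow> nat \<Rightarrow> ((nat \<Rightarrow> real) \<Rightarrow> (nat \<Rightarrow> real)) \<Rightarrow> bool" where
  base: "nn_pre d d (\<lambda>x. x)"
| step: "nn_pre d m f \<Longrightarrow> 1 \<le> n \<Longrightarrow> n \<le> d \<Longrightarrow>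
         nn_pre d n (LReLU_vec \<beta> \<circ> affine_map m n A b \<circ> f)"

definition NN_LReLU :: "nat \<Rightarrow> ((nat \<Rightarrow> real) \<Rightarrow> (nat \<Rightarrow> real)) set" where
  "NN_LReLU d = {affine_map m d A b \<circ> f | m A b f. nn_pre d m f}"

text \<open>The map h(x) = (x_1,...,x_{d-1}, x_d + t(x_1,...,x_{d-1})) (0-indexed here).\<close>
definition shear_map :: "nat \<Rightarrow> ((nat \<Rightarrow> real) \<Rightarrow> real) \<Rightarrow> (nat \<Rightarrow> real) \<Rightarrow> (nat \<Rightarrow> real)" where
  "shear_map d t x = (\<lambda>i. if i < d - 1 then x i
      else if i = d - 1 then x i + t (\<lambda>j. if j < d - 1 then x j else 0) else 0)"

end

theory Submission
  imports Defs "HOL-Analysis.Analysis"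
begin


lemma finite_Min_in:
  assumes "finite F" "F \<noteq> {}" "\<forall>y\<in>F. G y \<in> L"
    and minL: "\<And>f g. f \<in> L \<Longrightarrow> g \<in> L \<Longrightarrow> (\<lambda>x. min (f x) (g x)) \<in> L"
  shows "(\<lambda>z. Min ((\<lambda>y. G y z) ` F)) \<in> L"
  using assms(1,2,3)
proof (induction F rule: finite_ne_induct)
  case (singleton y)
  then show ?case by simp
next
  case (insert y F)
  have "(\<lambda>z. Min ((\<lambda>y. G y z) ` insert y F)) = (\<lambda>z. min (G y z) (Min ((\<lambda>y. G y z) ` F)))"
    using insert by (auto simp: Min_insert)
  then show ?case using insert minL by simp
qed

lemma finite_Max_in:
  assumes "finite F" "F \<noteq> {}" "\<forall>y\<in>F. G y \<in> L"
    and maxL: "\<And>f g. f \<in> L \<Longrightarrow> g \<in> L \<Longrightarrow> (\<lambda>x. max (f x) (g x)) \<in> L"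
  shows "(\<lambda>z. Max ((\<lambda>y. G y z) ` F)) \<in> L"
  using assms(1,2,3)
proof (induction F rule: finite_ne_induct)
  case (singleton y)
  then show ?case by simp
next
  case (insert y F)
  have "(\<lambda>z. Max ((\<lambda>y. G y z) ` insert y F)) = (\<lambda>z. max (G y z) (Max ((\<lambda>y. G y z) ` F)))"
    using insert by (auto simp: Max_insert)
  then show ?case using insert maxL by simp
qed

lemma lattice_SW:
  fixes S :: "'a::topological_space set" and L :: "('a \<Rightarrow> real) set"
  assumes S: "compact S"
    and cont: "\<And>f. f \<in> L \<Longrightarrow> continuous_on S f"
    and maxL: "\<And>f g. f \<in> L \<Longrightarrow> g \<in> L \<Longrightarrow> (\<lambda>x. max (f x) (g x)) \<in> L"
    and minL: "\<And>f g. f \<in> L \<Longrightarrow> g \<in> L \<Longrightarrow> (\<lambda>x. min (f x) (g x)) \<in> L"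
    and interp: "\<And>x y a b. x \<in> S \<Longrightarrow> y \<in> S \<Longrightarrow> (x = y \<Longrightarrow> a = b) \<Longrightarrow> \<exists>g\<in>L. g x = a \<and> g y = b"
    and f: "continuous_on S f" and e: "e > 0" and ne: "S \<noteq> {}"
  shows "\<exists>g\<in>L. \<forall>x\<in>S. \<bar>f x - g x\<bar> < e"
proof -
  have stepA: "\<exists>h\<in>L. h x = f x \<and> (\<forall>z\<in>S. h z < f z + e)" if x: "x \<in> S" for x
  proof -
    have "\<forall>y\<in>S. \<exists>g\<in>L. \<exists>A. open A \<and> y \<in> A \<and> g x = f x \<and> (\<forall>z\<in>S. z \<in> A \<longrightarrow> g z < f z + e)"
    proof
      fix y assume y: "y \<in> S"
      obtain g where g: "g \<in> L" "g x = f x" "g y = f y" using interp[OF x y, of "f x" "f y"] by auto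
      have "continuous_on S (\<lambda>z. g z - f z)" using cont[OF g(1)] f by (intro continuous_intros)
      then obtain A where A: "open A" "A \<inter> S = (\<lambda>z. g z - f z) -` {..<e} \<inter> S"
        using continuous_on_open_invariant[THEN iffD1, rule_format, of S _ "{..<e}"] by auto
      have "y \<in> A" using A(2) y g(3) e by auto
      moreover have "\<forall>z\<in>S. z \<in> A \<longrightarrow> g z < f z + e"
      proof (intro ballI impI)
        fix z assume "z \<in> S" "z \<in> A"
        then have "z \<in> A \<inter> S" by blast
        then show "g z < f z + e" unfolding A(2) by simp
      qed
      ultimately show "\<exists>g\<in>L. \<exists>A. open A \<and> y \<in> A \<and> g x = f x \<and> (\<forall>z\<in>S. z \<in> A \<longrightarrow> g z < f z + e)"
        using g A(1) by blast
    qed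
    then obtain G A where GA: "\<And>y. y \<in> S \<Longrightarrow> G y \<in> L \<and> open (A y) \<and> y \<in> A y \<and> G y x = f x \<and> (\<forall>z\<in>S. z \<in> A y \<longrightarrow> G y z < f z + e)"
      by metis
    have "S \<subseteq> (\<Union>y\<in>S. A y)" using GA by blast
    then obtain F where F: "F \<subseteq> S" "finite F" "S \<subseteq> (\<Union>y\<in>F. A y)"
      using compactE_image[OF S, of S A] GA by blast
    have Fne: "F \<noteq> {}" using F(3) x by auto
    define h where "h = (\<lambda>z. Min ((\<lambda>y. G y z) ` F))"
    have "h \<in> L" unfolding h_def using finite_Min_in[OF F(2) Fne _ minL] GA F(1) by blast
    moreover have "h x = f x"
    proof -
      have "(\<lambda>y. G y x) ` F = {f x}" using GA F(1) Fne by force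
      then show ?thesis unfolding h_def by simp
    qed
    moreover have "h z < f z + e" if z: "z \<in> S" for z
    proof -
      obtain y where y: "y \<in> F" "z \<in> A y" using F(3) z by auto
      have "h z \<le> G y z" unfolding h_def using y F(2) by (intro Min_le) auto
      also have "\<dots> < f z + e" using GA[of y] y F(1) z by auto
      finally show ?thesis .
    qed
    ultimately show ?thesis by blast
  qed
  have "\<forall>x\<in>S. \<exists>h\<in>L. \<exists>A. open A \<and> x \<in> A \<and> (\<forall>z\<in>S. h z < f z + e) \<and> (\<forall>z\<in>S. z \<in> A \<longrightarrow> h z > f z - e)"
  proof
    fix x assume x: "x \<in> S"
    obtain h where h: "h \<in> L" "h x = f x" "\<forall>z\<in>S. h z < f z + e" using stepA[OF x] by auto
    have "continuous_on S (\<lambda>z. h z - f z)" using cont[OF h(1)] f by (intro continuous_intros)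
    then obtain A where A: "open A" "A \<inter> S = (\<lambda>z. h z - f z) -` {-e<..} \<inter> S"
      using continuous_on_open_invariant[THEN iffD1, rule_format, of S _ "{-e<..}"] by auto
    have "x \<in> A" using A(2) x h(2) e by auto
    moreover have "\<forall>z\<in>S. z \<in> A \<longrightarrow> h z > f z - e"
    proof (intro ballI impI)
      fix z assume "z \<in> S" "z \<in> A"
      then have "z \<in> A \<inter> S" by blast
      then show "h z > f z - e" unfolding A(2) by simp
    qed
    ultimately show "\<exists>h\<in>L. \<exists>A. open A \<and> x \<in> A \<and> (\<forall>z\<in>S. h z < f z + e) \<and> (\<forall>z\<in>S. z \<in> A \<longrightarrow> h z > f z - e)"
      using h A(1) by blast
  qed
  then obtain H A where HA: "\<And>x. x \<in> S \<Longrightarrow> H x \<in> L \<and> open (A x) \<and> x \<in> A x \<and> (\<forall>z\<in>S. H x z < f z + e) \<and> (\<forall>z\<in>S. z \<in> A x \<longrightarrow> H x z > f z - e)"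
    by metis
  have "S \<subseteq> (\<Union>y\<in>S. A y)" using HA by blast
  then obtain F where F: "F \<subseteq> S" "finite F" "S \<subseteq> (\<Union>y\<in>F. A y)"
    using compactE_image[OF S, of S A] HA by blast
  have Fne: "F \<noteq> {}" using F(3) ne by auto
  define k where "k = (\<lambda>z. Max ((\<lambda>y. H y z) ` F))"
  have "k \<in> L" unfolding k_def using finite_Max_in[OF F(2) Fne _ maxL] HA F(1) by blast
  moreover have "\<bar>f z - k z\<bar> < e" if z: "z \<in> S" for z
  proof -
    obtain y where y: "y \<in> F" "z \<in> A y" using F(3) z by auto
    have "f z - e < H y z" using HA[of y] y F(1) z by auto
    also have "H y z \<le> k z" unfolding k_def using y F(2) by (intro Max_ge) auto
    finally have 1: "f z - e < k z" .
    have "k z < f z + e" unfolding k_def using F Fne HA z by (subst Max_less_iff) auto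
    with 1 show ?thesis by linarith
  qed
  ultimately show ?thesis by blast
qed



definition projD :: "nat \<Rightarrow> (nat \<Rightarrow> real) \<Rightarrow> (nat \<Rightarrow> real)" where
  "projD D x = (\<lambda>j. if j < D then x j else 0)"

definition genA :: "nat \<Rightarrow> real \<Rightarrow> (nat \<Rightarrow> real) \<Rightarrow> nat \<Rightarrow> nat \<Rightarrow> real" where
  "genA D s a = (\<lambda>i j. if i = D then (if j = D then s else if j < D then a j else 0) else (if i = j then 1 else 0))"

definition genb :: "nat \<Rightarrow> real \<Rightarrow> real \<Rightarrow> nat \<Rightarrow> real" where
  "genb D C c = (\<lambda>i. if i < D then C else if i = D then c else 0)"

definition lay where
  "lay D \<beta> s a C c = LReLU_vec \<beta> \<circ> affine_map (Suc D) (Suc D) (genA D s a) (genb D C c)"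

lemma genaff:
  "affine_map (Suc D) (Suc D) (genA D s a) (genb D C c) x =
   (\<lambda>i. if i < D then x i + C else if i = D then s * x D + (\<Sum>j<D. a j * x j) + c else 0)"
proof
  fix i
  show "affine_map (Suc D) (Suc D) (genA D s a) (genb D C c) x i =
   (if i < D then x i + C else if i = D then s * x D + (\<Sum>j<D. a j * x j) + c else 0)"
  proof (cases "i < D")
    case True
    have "(\<Sum>j<Suc D. genA D s a i j * x j) = (\<Sum>j<Suc D. if j = i then x j else 0)"
      using True by (intro sum.cong) (auto simp: genA_def)
    also have "\<dots> = x i" using True by (simp add: sum.delta')
    finally show ?thesis using True by (simp add: affine_map_def genb_def)
  next
    case False
    show ?thesis
    proof (cases "i = D")
      case True
      have "(\<Sum>j<Suc D. genA D s a i j * x j) = s * x D + (\<Sum>j<D. a j * x j)"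
        using True by (simp add: sum.lessThan_Suc genA_def)
      then show ?thesis using True by (simp add: affine_map_def genb_def)
    next
      case False2: False
      then show ?thesis using False by (simp add: affine_map_def genb_def)
    qed
  qed
qed

lemma LReLU_alt: "LReLU \<beta> u = u + (\<beta> - 1) * min u 0"
  by (simp add: LReLU_def algebra_simps)

lemma LReLU_one[simp]: "LReLU 1 u = u" by (simp add: LReLU_def)
lemma LReLU_zero[simp]: "LReLU \<beta> 0 = 0" by (simp add: LReLU_def)
lemma LReLU_pos: "u \<ge> 0 \<Longrightarrow> LReLU \<beta> u = u" by (simp add: LReLU_def)

lemma lay1:
  "lay D 1 s a C c x = (\<lambda>i. if i < D then x i + C else if i = D then s * x D + (\<Sum>j<D. a j * x j) + c else 0)"
  by (simp add: lay_def genaff LReLU_vec_def)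

lemma layb:
  "lay D \<beta> s a C c x = (\<lambda>i. if i < D then LReLU \<beta> (x i + C) else if i = D then LReLU \<beta> (s * x D + (\<Sum>j<D. a j * x j) + c) else 0)"
  by (auto simp add: lay_def genaff LReLU_vec_def)

lemma nn_comp: "nn_pre d m g \<Longrightarrow> nn_pre d d f \<Longrightarrow> nn_pre d m (g \<circ> f)"
proof (induction rule: nn_pre.induct)
  case (base d) then show ?case by simp
next
  case (step d m g n \<beta> A b)
  have gf: "nn_pre d m (g \<circ> f)" using step.IH step.prems by blast
  have "nn_pre d n (LReLU_vec \<beta> \<circ> affine_map m n A b \<circ> (g \<circ> f))" using nn_pre.step[OF gf, of n \<beta> A b] step.hyps by blast
  then show ?case by (simp add: comp_def)
qed

lemma nn_lay: "nn_pre (Suc D) (Suc D) f \<Longrightarrow> nn_pre (Suc D) (Suc D) (lay D \<beta> s a C c \<circ> f)"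
  unfolding lay_def using nn_pre.step[of "Suc D" "Suc D" f "Suc D" \<beta>] by auto

lemma nn_lay0: "nn_pre (Suc D) (Suc D) (lay D \<beta> s a C c)"
  using nn_lay[OF nn_pre.base, of D \<beta> s a C c] by (simp add: o_def)

definition real_ok where
  "real_ok D S N \<phi> R \<eta> \<longleftrightarrow> nn_pre (Suc D) (Suc D) N \<and>
     (\<forall>x. x \<in> rvec (Suc D) \<longrightarrow> projD D x \<in> S \<longrightarrow> \<bar>x D\<bar> \<le> R \<longrightarrow>
        (\<forall>i. i \<noteq> D \<longrightarrow> N x i = x i) \<and> \<bar>N x D - x D - \<phi> (projD D x)\<bar> \<le> \<eta>)"

definition good where
  "good D S \<phi> \<longleftrightarrow> (\<forall>R \<eta>. \<eta> > 0 \<longrightarrow> (\<exists>N. real_ok D S N \<phi> R \<eta>))"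

lemma rvec_Suc_eq: "x \<in> rvec (Suc D) \<Longrightarrow> (\<forall>i. i \<noteq> D \<longrightarrow> y i = x i) \<Longrightarrow> y \<in> rvec (Suc D)"
  by (auto simp: rvec_def)

lemma projD_eq: "(\<forall>i. i \<noteq> D \<longrightarrow> y i = x i) \<Longrightarrow> projD D y = projD D x"
  by (auto simp: projD_def)

lemma good_affine: "good D S (\<lambda>z. (\<Sum>j<D. a j * z j) + c)"
  unfolding good_def
proof (intro allI impI exI)
  fix R \<eta> :: real assume "\<eta> > 0"
  show "real_ok D S (lay D 1 1 a 0 c) (\<lambda>z. (\<Sum>j<D. a j * z j) + c) R \<eta>"
    unfolding real_ok_def
  proof (rule conjI[OF nn_lay0], intro allI impI)
    fix x assume x: "x \<in> rvec (Suc D)" and "projD D x \<in> S" "\<bar>x D\<bar> \<le> R"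
    have "\<forall>i. i \<noteq> D \<longrightarrow> lay D 1 1 a 0 c x i = x i" using x by (auto simp: lay1 rvec_def)
    moreover have "(\<Sum>j<D. a j * projD D x j) = (\<Sum>j<D. a j * x j)" by (intro sum.cong) (auto simp: projD_def)
    then have "\<bar>lay D 1 1 a 0 c x D - x D - ((\<Sum>j<D. a j * projD D x j) + c)\<bar> \<le> \<eta>"
      using \<open>\<eta> > 0\<close> by (simp add: lay1)
    ultimately show "(\<forall>i. i \<noteq> D \<longrightarrow> lay D 1 1 a 0 c x i = x i) \<and> \<bar>lay D 1 1 a 0 c x D - x D - ((\<Sum>j<D. a j * projD D x j) + c)\<bar> \<le> \<eta>" by blast
  qed
qed

lemma real_okD:
  assumes "real_ok D S N \<phi> R \<eta>" "x \<in> rvec (Suc D)" "projD D x \<in> S" "\<bar>x D\<bar> \<le> R"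
  shows "\<forall>i. i \<noteq> D \<longrightarrow> N x i = x i" "\<bar>N x D - x D - \<phi> (projD D x)\<bar> \<le> \<eta>"
    "N x \<in> rvec (Suc D)" "projD D (N x) = projD D x"
  using assms unfolding real_ok_def by (auto intro: rvec_Suc_eq projD_eq)

lemma good_add:
  assumes g1: "good D S \<phi>1" and g2: "good D S \<phi>2" and M: "\<forall>z\<in>S. \<bar>\<phi>1 z\<bar> \<le> M"
  shows "good D S (\<lambda>z. \<phi>1 z + \<phi>2 z)"
  unfolding good_def
proof (intro allI impI)
  fix R \<eta> :: real assume e: "\<eta> > 0"
  have e2: "\<eta>/2 > 0" using e by simp
  obtain N1 where N1: "real_ok D S N1 \<phi>1 R (\<eta>/2)" using g1 e2 unfolding good_def by blast
  obtain N2 where N2: "real_ok D S N2 \<phi>2 (R + M + \<eta>/2) (\<eta>/2)" using g2 e2 unfolding good_def by blast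
  have "real_ok D S (N2 \<circ> N1) (\<lambda>z. \<phi>1 z + \<phi>2 z) R \<eta>"
    unfolding real_ok_def
  proof (rule conjI, intro nn_comp) 
    show "nn_pre (Suc D) (Suc D) N2" "nn_pre (Suc D) (Suc D) N1" using N1 N2 by (auto simp: real_ok_def)
    show "\<forall>x. x \<in> rvec (Suc D) \<longrightarrow> projD D x \<in> S \<longrightarrow> \<bar>x D\<bar> \<le> R \<longrightarrow>
        (\<forall>i. i \<noteq> D \<longrightarrow> (N2 \<circ> N1) x i = x i) \<and> \<bar>(N2 \<circ> N1) x D - x D - (\<phi>1 (projD D x) + \<phi>2 (projD D x))\<bar> \<le> \<eta>"
    proof (intro allI impI)
      fix x assume x: "x \<in> rvec (Suc D)" "projD D x \<in> S" "\<bar>x D\<bar> \<le> R"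
      note A = real_okD[OF N1 x]
      have b: "\<bar>N1 x D\<bar> \<le> R + M + \<eta>/2" proof -
        have "\<bar>\<phi>1 (projD D x)\<bar> \<le> M" using M x(2) by blast
        then show ?thesis using A(2) x(3) by linarith
      qed
      note B = real_okD[OF N2 A(3) _ b, unfolded A(4), OF x(2)]
      show "(\<forall>i. i \<noteq> D \<longrightarrow> (N2 \<circ> N1) x i = x i) \<and> \<bar>(N2 \<circ> N1) x D - x D - (\<phi>1 (projD D x) + \<phi>2 (projD D x))\<bar> \<le> \<eta>"
        using A(1,2) B(1,2) by (simp add: abs_le_iff; linarith)
    qed
  qed
  then show "\<exists>N. real_ok D S N (\<lambda>z. \<phi>1 z + \<phi>2 z) R \<eta>" by blast
qed

lemma good_scale:
  assumes g: "good D S \<phi>"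
  shows "good D S (\<lambda>z. c * \<phi> z)"
proof (cases "c = 0")
  case True
  then show ?thesis using good_affine[of D S "\<lambda>_. 0" 0] by simp
next
  case False
  show ?thesis unfolding good_def
  proof (intro allI impI)
    fix R \<eta> :: real assume e: "\<eta> > 0"
    have e2: "\<eta> / \<bar>c\<bar> > 0" using e False by simp
    obtain N1 where N1: "real_ok D S N1 \<phi> (\<bar>R\<bar> / \<bar>c\<bar>) (\<eta> / \<bar>c\<bar>)" using g e2 unfolding good_def by blast
    have "real_ok D S (lay D 1 c (\<lambda>_. 0) 0 0 \<circ> N1 \<circ> lay D 1 (1/c) (\<lambda>_. 0) 0 0) (\<lambda>z. c * \<phi> z) R \<eta>"
      unfolding real_ok_def
    proof (rule conjI)
      show "nn_pre (Suc D) (Suc D) (lay D 1 c (\<lambda>_. 0) 0 0 \<circ> N1 \<circ> lay D 1 (1/c) (\<lambda>_. 0) 0 0)"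
        using N1 unfolding real_ok_def by (auto intro!: nn_comp nn_lay nn_lay0 simp: o_assoc)
      show "\<forall>x. x \<in> rvec (Suc D) \<longrightarrow> projD D x \<in> S \<longrightarrow> \<bar>x D\<bar> \<le> R \<longrightarrow>
        (\<forall>i. i \<noteq> D \<longrightarrow> (lay D 1 c (\<lambda>_. 0) 0 0 \<circ> N1 \<circ> lay D 1 (1/c) (\<lambda>_. 0) 0 0) x i = x i) \<and>
        \<bar>(lay D 1 c (\<lambda>_. 0) 0 0 \<circ> N1 \<circ> lay D 1 (1/c) (\<lambda>_. 0) 0 0) x D - x D - c * \<phi> (projD D x)\<bar> \<le> \<eta>"
      proof (intro allI impI)
        fix x assume x: "x \<in> rvec (Suc D)" "projD D x \<in> S" "\<bar>x D\<bar> \<le> R"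
        define x1 where "x1 = lay D 1 (1/c) (\<lambda>_. 0) 0 0 x"
        have x1: "\<forall>i. i \<noteq> D \<longrightarrow> x1 i = x i" "x1 D = x D / c"
          using x(1) by (auto simp: x1_def lay1 rvec_def)
        have x1r: "x1 \<in> rvec (Suc D)" "projD D x1 = projD D x" using x1 x(1) by (auto intro: rvec_Suc_eq projD_eq)
        have b: "\<bar>x1 D\<bar> \<le> \<bar>R\<bar> / \<bar>c\<bar>" using x1(2) x(3) False by (simp add: abs_divide divide_right_mono)
        note A = real_okD[OF N1 x1r(1) _ b, unfolded x1r(2), OF x(2)]
        have eq: "(lay D 1 c (\<lambda>_. 0) 0 0 \<circ> N1 \<circ> lay D 1 (1/c) (\<lambda>_. 0) 0 0) x = lay D 1 c (\<lambda>_. 0) 0 0 (N1 x1)"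
          by (simp add: x1_def)
        have "\<bar>c * (N1 x1 D - x1 D - \<phi> (projD D x))\<bar> \<le> \<bar>c\<bar> * (\<eta> / \<bar>c\<bar>)"
          using A(2) False by (simp add: abs_mult mult_left_mono del: times_divide_eq_right)
        then have "\<bar>c * N1 x1 D - x D - c * \<phi> (projD D x)\<bar> \<le> \<eta>"
          using False x1(2) by (simp add: algebra_simps)
        then show "(\<forall>i. i \<noteq> D \<longrightarrow> (lay D 1 c (\<lambda>_. 0) 0 0 \<circ> N1 \<circ> lay D 1 (1/c) (\<lambda>_. 0) 0 0) x i = x i) \<and>
        \<bar>(lay D 1 c (\<lambda>_. 0) 0 0 \<circ> N1 \<circ> lay D 1 (1/c) (\<lambda>_. 0) 0 0) x D - x D - c * \<phi> (projD D x)\<bar> \<le> \<eta>"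
          unfolding eq using A(1) x1(1) x(1) by (auto simp: lay1 rvec_def)
      qed
    qed
    then show "\<exists>N. real_ok D S N (\<lambda>z. c * \<phi> z) R \<eta>" by blast
  qed
qed

lemma good_relu:
  assumes gm: "good D S (\<lambda>z. - \<phi> z)" and gp: "good D S \<phi>"
    and M: "\<forall>z\<in>S. \<bar>\<phi> z\<bar> \<le> M" and C: "\<forall>z\<in>S. \<forall>j<D. \<bar>z j\<bar> \<le> C"
  shows "good D S (\<lambda>z. max (\<phi> z) 0)"
  unfolding good_def
proof (intro allI impI)
  fix R \<eta> :: real assume e: "\<eta> > 0"
  define R0 where "R0 = \<bar>R\<bar>"
  define \<epsilon> where "\<epsilon> = min 1 (\<eta> / (3 * (R0 + 1)))"
  define \<eta>1 where "\<eta>1 = \<epsilon> * \<eta> / 6"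
  have R0: "R0 \<ge> 0" by (simp add: R0_def)
  have ep: "\<epsilon> > 0" "\<epsilon> \<le> 1" using e R0 by (auto simp: \<epsilon>_def)
  have eR: "\<epsilon> * R0 \<le> \<eta> / 3"
  proof -
    have "\<epsilon> * (3 * (R0 + 1)) \<le> \<eta>" using R0 unfolding \<epsilon>_def
      by (metis min.cobounded2 le_divide_eq mult.commute add_nonneg_pos zero_less_one mult_pos_pos zero_less_numeral)
    then show ?thesis using ep by (simp add: algebra_simps)
  qed
  have e1: "\<eta>1 > 0" using ep e by (simp add: \<eta>1_def)
  obtain N1 where N1: "real_ok D S N1 (\<lambda>z. - \<phi> z) R0 \<eta>1" using gm e1 unfolding good_def by blast
  obtain N2 where N2: "real_ok D S N2 \<phi> (R0 + M + \<eta>1) \<eta>1" using gp e1 unfolding good_def by blast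
  define \<beta> where "\<beta> = 1 - \<epsilon>"
  define N where "N = lay D 1 (1/\<epsilon>) (\<lambda>_. 0) 0 0 \<circ> N2 \<circ> lay D 1 1 (\<lambda>_. 0) (-C) 0 \<circ> lay D \<beta> 1 (\<lambda>_. 0) C 0 \<circ> N1 \<circ> lay D 1 \<epsilon> (\<lambda>_. 0) 0 0"
  have "real_ok D S N (\<lambda>z. max (\<phi> z) 0) R \<eta>"
    unfolding real_ok_def
  proof (rule conjI)
    show "nn_pre (Suc D) (Suc D) N"
      using N1 N2 unfolding real_ok_def N_def by (auto intro!: nn_comp nn_lay nn_lay0 simp: o_assoc)
    show "\<forall>x. x \<in> rvec (Suc D) \<longrightarrow> projD D x \<in> S \<longrightarrow> \<bar>x D\<bar> \<le> R \<longrightarrow>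
        (\<forall>i. i \<noteq> D \<longrightarrow> N x i = x i) \<and> \<bar>N x D - x D - max (\<phi> (projD D x)) 0\<bar> \<le> \<eta>"
    proof (intro allI impI)
      fix x assume x: "x \<in> rvec (Suc D)" "projD D x \<in> S" "\<bar>x D\<bar> \<le> R"
      define p where "p = \<phi> (projD D x)"
      have xi: "\<bar>x i\<bar> \<le> C" if "i < D" for i
        using C x(2) that by (metis projD_def)
      define x1 where "x1 = lay D 1 \<epsilon> (\<lambda>_. 0) 0 0 x"
      have x1: "\<forall>i. i \<noteq> D \<longrightarrow> x1 i = x i" "x1 D = \<epsilon> * x D"
        using x(1) by (auto simp: x1_def lay1 rvec_def)
      have x1r: "x1 \<in> rvec (Suc D)" "projD D x1 = projD D x" using x1 x(1) by (auto intro: rvec_Suc_eq projD_eq)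
      have b1: "\<bar>x1 D\<bar> \<le> R0"
      proof -
        have "\<bar>x1 D\<bar> = \<epsilon> * \<bar>x D\<bar>" using x1(2) ep by (simp add: abs_mult)
        also have "\<dots> \<le> 1 * R0" using ep x(3) R0 unfolding R0_def by (intro mult_mono) auto
        finally show ?thesis by simp
      qed
      note A = real_okD[OF N1 x1r(1) _ b1, unfolded x1r(2), OF x(2)]
      define x2 where "x2 = N1 x1"
      define u where "u = x2 D"
      have x2: "\<forall>i. i \<noteq> D \<longrightarrow> x2 i = x i" "\<bar>u - \<epsilon> * x D + p\<bar> \<le> \<eta>1"
        using A(1,2) x1 unfolding x2_def u_def p_def by auto
      define x4 where "x4 = (lay D 1 1 (\<lambda>_. 0) (-C) 0 \<circ> lay D \<beta> 1 (\<lambda>_. 0) C 0) x2"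
      have x4: "\<forall>i. i \<noteq> D \<longrightarrow> x4 i = x i" "x4 D = LReLU \<beta> u"
      proof -
        show "x4 D = LReLU \<beta> u" by (simp add: x4_def u_def lay1 layb)
        show "\<forall>i. i \<noteq> D \<longrightarrow> x4 i = x i"
        proof (intro allI impI)
          fix i assume i: "i \<noteq> D"
          show "x4 i = x i"
          proof (cases "i < D")
            case True
            have "x i + C \<ge> 0" using xi[OF True] by linarith
            then show ?thesis using True x2(1) i by (simp add: x4_def lay1 layb LReLU_pos)
          next
            case False
            then show ?thesis using x(1) i by (simp add: x4_def lay1 layb rvec_def)
          qed
        qed
      qed
      have x4r: "x4 \<in> rvec (Suc D)" "projD D x4 = projD D x" using x4 x(1) by (auto intro: rvec_Suc_eq projD_eq)
      have pM: "\<bar>p\<bar> \<le> M" using M x(2) unfolding p_def by blast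
      have xR: "\<bar>x D\<bar> \<le> R0" using x(3) unfolding R0_def by linarith
      have ex: "\<bar>\<epsilon> * x D\<bar> \<le> \<epsilon> * R0" using xR ep by (simp add: abs_mult mult_left_mono)
      have "\<bar>LReLU \<beta> u\<bar> \<le> \<bar>u\<bar>" using ep by (auto simp: LReLU_def \<beta>_def abs_mult mult_le_cancel_right1)
      then have b4: "\<bar>x4 D\<bar> \<le> R0 + M + \<eta>1" using x4(2) x2(2) ex pM ep R0
        by (smt (verit) mult_left_le_one_le)
      note B = real_okD[OF N2 x4r(1) _ b4, unfolded x4r(2), OF x(2)]
      define x5 where "x5 = N2 x4"
      have x5: "\<forall>i. i \<noteq> D \<longrightarrow> x5 i = x i" "\<bar>x5 D - x4 D - p\<bar> \<le> \<eta>1"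
        using B x4 unfolding x5_def p_def by auto
      have Nx: "N x = lay D 1 (1/\<epsilon>) (\<lambda>_. 0) 0 0 x5"
        by (simp add: N_def x5_def x4_def x2_def x1_def)
      show "(\<forall>i. i \<noteq> D \<longrightarrow> N x i = x i) \<and> \<bar>N x D - x D - max (\<phi> (projD D x)) 0\<bar> \<le> \<eta>"
      proof
        show "\<forall>i. i \<noteq> D \<longrightarrow> N x i = x i" using x5(1) x(1) by (auto simp: Nx lay1 rvec_def)
        define m where "m = min u 0 - min (-p) 0"
        have mb: "\<bar>m\<bar> \<le> \<eta>1 + \<epsilon> * R0" using x2(2) ex unfolding m_def by linarith
        have "\<bar>\<epsilon> * m\<bar> \<le> \<epsilon> * (\<eta>1 + \<epsilon> * R0)" using mb ep by (simp add: abs_mult)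
        also have "\<dots> \<le> \<eta>1 + \<epsilon> * (\<eta> / 3)"
        proof -
          have "\<epsilon> * \<eta>1 \<le> \<eta>1" using ep e1 by (simp add: mult_left_le_one_le)
          moreover have "\<epsilon> * (\<epsilon> * R0) \<le> \<epsilon> * (\<eta> / 3)" using ep eR by (simp add: mult_left_mono)
          ultimately show ?thesis by (simp add: distrib_left)
        qed
        finally have em: "\<bar>\<epsilon> * m\<bar> \<le> \<eta>1 + \<epsilon> * (\<eta> / 3)" .
        have lr: "LReLU \<beta> u = u - \<epsilon> * min u 0" by (simp add: LReLU_alt \<beta>_def)
        have eq: "x5 D - \<epsilon> * x D - \<epsilon> * max p 0 = (x5 D - x4 D - p) + (u - \<epsilon> * x D + p) - \<epsilon> * m"
          unfolding m_def using x4(2) lr by (simp add: algebra_simps max_def min_def)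
        have "\<bar>x5 D - \<epsilon> * x D - \<epsilon> * max p 0\<bar> \<le> \<epsilon> * \<eta>"
          using eq x5(2) x2(2) em e ep unfolding \<eta>1_def by (simp add: abs_le_iff; linarith)
        then have "\<bar>\<epsilon> * (x5 D / \<epsilon> - x D - max p 0)\<bar> \<le> \<epsilon> * \<eta>"
          using ep by (simp add: algebra_simps)
        then have "\<bar>x5 D / \<epsilon> - x D - max p 0\<bar> \<le> \<eta>" using ep by (simp add: abs_mult)
        then show "\<bar>N x D - x D - max (\<phi> (projD D x)) 0\<bar> \<le> \<eta>"
          by (simp add: Nx lay1 p_def)
      qed
    qed
  qed
  then show "\<exists>N. real_ok D S N (\<lambda>z. max (\<phi> z) 0) R \<eta>" by blast
qed



lemma cont_coord[continuous_intros]: "continuous_on S (\<lambda>z::nat \<Rightarrow> real. z j)"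
  by (rule continuous_on_subset[OF continuous_on_product_coordinates]) auto

lemma bnd_cont:
  fixes f :: "'a::topological_space \<Rightarrow> real"
  assumes "compact S" "continuous_on S f"
  shows "\<exists>M. \<forall>z\<in>S. \<bar>f z\<bar> \<le> M"
proof -
  have "bounded (f ` S)" using assms compact_continuous_image compact_imp_bounded by blast
  then obtain M where "\<forall>y\<in>f ` S. norm y \<le> M" by (auto simp: bounded_iff)
  then show ?thesis by auto
qed

lemma good_cont_affine: "continuous_on S (\<lambda>z::nat\<Rightarrow>real. (\<Sum>j<D. a j * z j) + c)"
  by (intro continuous_intros)

lemma L_max:
  assumes S: "compact S"
    and C: "\<forall>z\<in>S. \<forall>j<D. \<bar>z j\<bar> \<le> C"
    and f: "continuous_on S f" "good D S f" and g: "continuous_on S g" "good D S g"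
  shows "good D S (\<lambda>x. max (f x) (g x))"
proof -
  define \<psi> where "\<psi> = (\<lambda>z. g z + (-1) * f z)"
  obtain Mg where Mg: "\<forall>z\<in>S. \<bar>g z\<bar> \<le> Mg" using bnd_cont[OF S g(1)] by blast
  obtain Mf where Mf: "\<forall>z\<in>S. \<bar>f z\<bar> \<le> Mf" using bnd_cont[OF S f(1)] by blast
  have cpsi: "continuous_on S \<psi>" unfolding \<psi>_def using f g by (intro continuous_intros)
  obtain Mp where Mp: "\<forall>z\<in>S. \<bar>\<psi> z\<bar> \<le> Mp" using bnd_cont[OF S cpsi] by blast
  have gpsi: "good D S \<psi>" unfolding \<psi>_def using good_add[OF g(2) good_scale[OF f(2)] Mg] .
  have "(\<lambda>z. - \<psi> z) = (\<lambda>z. (-1) * \<psi> z)" by simp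
  then have gmpsi: "good D S (\<lambda>z. - \<psi> z)" using good_scale[OF gpsi, of "-1"] by simp
  have "good D S (\<lambda>z. max (\<psi> z) 0)" using good_relu[OF gmpsi gpsi Mp C] .
  then have "good D S (\<lambda>z. f z + max (\<psi> z) 0)" using good_add[OF f(2) _ Mf] by blast
  moreover have "(\<lambda>z. f z + max (\<psi> z) 0) = (\<lambda>x. max (f x) (g x))"
    unfolding \<psi>_def by (auto simp: max_def)
  ultimately show ?thesis by simp
qed

lemma L_min:
  assumes S: "compact S"
    and C: "\<forall>z\<in>S. \<forall>j<D. \<bar>z j\<bar> \<le> C"
    and f: "continuous_on S f" "good D S f" and g: "continuous_on S g" "good D S g"
  shows "good D S (\<lambda>x. min (f x) (g x))"
proof -
  have "good D S (\<lambda>x. max ((-1) * f x) ((-1) * g x))"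
    using f g by (intro L_max[OF S C] good_scale continuous_intros)
  then have "good D S (\<lambda>z. (-1) * max ((-1) * f z) ((-1) * g z))" by (rule good_scale)
  moreover have "(\<lambda>z. (-1) * max ((-1) * f z) ((-1) * g z)) = (\<lambda>x. min (f x) (g x))"
    by (auto simp: max_def min_def)
  ultimately show ?thesis by simp
qed

lemma interp:
  assumes S: "S \<subseteq> rvec D" and x: "x \<in> S" and y: "y \<in> S" and ab: "x = y \<Longrightarrow> a = b"
  shows "\<exists>g\<in>{\<phi>. continuous_on S \<phi> \<and> good D S \<phi>}. g x = a \<and> g y = b"
proof (cases "x = y")
  case True
  have "good D S (\<lambda>z. (\<Sum>j<D. 0 * z j) + a)" by (rule good_affine)
  moreover have "continuous_on S (\<lambda>z::nat\<Rightarrow>real. (\<Sum>j<D. 0 * z j) + a)" by (intro continuous_intros)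
  ultimately show ?thesis using True ab by (intro bexI[of _ "\<lambda>z. (\<Sum>j<D. 0 * z j) + a"]) auto
next
  case False
  obtain j where j: "x j \<noteq> y j" using False by auto
  have jD: "j < D"
  proof (rule ccontr)
    assume "\<not> j < D"
    then have "x j = 0" "y j = 0" using S x y by (auto simp: rvec_def)
    then show False using j by simp
  qed
  define c1 where "c1 = (b - a) / (y j - x j)"
  define c0 where "c0 = a - c1 * x j"
  define aa where "aa = (\<lambda>k. if k = j then c1 else 0)"
  have sumeq: "(\<Sum>k<D. aa k * z k) = c1 * z j" for z :: "nat \<Rightarrow> real"
  proof -
    have "(\<Sum>k<D. aa k * z k) = (\<Sum>k<D. if k = j then c1 * z j else 0)"
      by (intro sum.cong) (auto simp: aa_def)
    also have "\<dots> = c1 * z j" using jD by (simp add: sum.delta')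
    finally show ?thesis .
  qed
  have "good D S (\<lambda>z. (\<Sum>k<D. aa k * z k) + c0)" by (rule good_affine)
  moreover have "continuous_on S (\<lambda>z::nat\<Rightarrow>real. (\<Sum>k<D. aa k * z k) + c0)" by (intro continuous_intros)
  moreover have "c1 * x j + c0 = a" by (simp add: c0_def)
  moreover have "c1 * y j + c0 = b"
  proof -
    have "y j - x j \<noteq> 0" using j by simp
    then have "c1 * (y j - x j) = b - a" by (simp add: c1_def)
    then show ?thesis by (simp add: c0_def algebra_simps)
  qed
  ultimately show ?thesis by (intro bexI[of _ "\<lambda>z. (\<Sum>k<D. aa k * z k) + c0"]) (auto simp: sumeq)
qed

lemma approx_all:
  assumes S: "compact S" "S \<subseteq> rvec D" "S \<noteq> {}" and f: "continuous_on S f" and e: "e > 0"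
  shows "\<exists>g. good D S g \<and> (\<forall>x\<in>S. \<bar>f x - g x\<bar> < e)"
proof -
  have cc: "continuous_on S (\<lambda>z::nat\<Rightarrow>real. \<Sum>j<D. \<bar>z j\<bar>)" by (intro continuous_intros)
  obtain C where C0: "\<forall>z\<in>S. \<bar>\<Sum>j<D. \<bar>z j\<bar>\<bar> \<le> C" using bnd_cont[OF S(1) cc] by blast
  have C: "\<forall>z\<in>S. \<forall>j<D. \<bar>z j\<bar> \<le> C"
  proof (intro ballI allI impI)
    fix z j assume "z \<in> S" "j < D"
    then have "\<bar>z j\<bar> \<le> (\<Sum>j<D. \<bar>z j\<bar>)" by (intro member_le_sum) auto
    then show "\<bar>z j\<bar> \<le> C" using C0 \<open>z \<in> S\<close> by force
  qed
  have "\<exists>g\<in>{\<phi>. continuous_on S \<phi> \<and> good D S \<phi>}. \<forall>x\<in>S. \<bar>f x - g x\<bar> < e"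
  proof (rule lattice_SW[OF S(1) _ _ _ _ f e S(3)])
    show "\<And>x y a b. x \<in> S \<Longrightarrow> y \<in> S \<Longrightarrow> (x = y \<Longrightarrow> a = b) \<Longrightarrow>
      \<exists>g\<in>{\<phi>. continuous_on S \<phi> \<and> good D S \<phi>}. g x = a \<and> g y = b"
      by (rule interp[OF S(2)])
  qed (auto intro: L_max[OF S(1) C] L_min[OF S(1) C] continuous_on_max continuous_on_min)
  then show ?thesis by auto
qed

lemma id_aff: "i < n \<Longrightarrow> affine_map n n (\<lambda>i j. if i = j then 1 else 0) (\<lambda>_. 0) y i = y i"
proof -
  assume i: "i < n"
  have "(\<Sum>j<n. (if i = j then 1 else 0) * y j) = (\<Sum>j<n. if i = j then y j else 0)"
    by (intro sum.cong) auto
  then show ?thesis using i by (simp add: affine_map_def)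
qed

lemma nn_in: "nn_pre d d N \<Longrightarrow> affine_map d d (\<lambda>i j. if i = j then 1 else 0) (\<lambda>_. 0) \<circ> N \<in> NN_LReLU d"
  unfolding NN_LReLU_def by blast

theorem mainTheorem6:
  fixes d :: nat and t :: "(nat \<Rightarrow> real) \<Rightarrow> real"
    and K :: "(nat \<Rightarrow> real) set" and \<epsilon> :: real
  assumes "d \<ge> 2"
    and "continuous_on (rvec (d - 1)) t"
    and "compact K" and "K \<subseteq> rvec d"
    and "\<epsilon> > 0"
  shows "\<exists>g \<in> NN_LReLU d. \<exists>\<delta> < \<epsilon>. \<forall>x \<in> K. \<forall>i < d.
           \<bar>shear_map d t x i - g x i\<bar> \<le> \<delta>"
proof -
  obtain D where dD: "d = Suc D" using assms(1) by (cases d) auto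
  have t: "continuous_on (rvec D) t" using assms(2) dD by simp
  have K: "compact K" "K \<subseteq> rvec (Suc D)" using assms(3,4) dD by auto
  define S where "S = projD D ` K"
  have cproj: "continuous_on K (projD D)"
    unfolding projD_def
  proof (intro continuous_on_coordinatewise_then_product)
    fix i show "continuous_on K (\<lambda>x::nat\<Rightarrow>real. if i < D then x i else 0)"
      by (cases "i < D") (auto intro: continuous_intros)
  qed
  have Sc: "compact S" unfolding S_def using compact_continuous_image[OF cproj K(1)] .
  have Sr: "S \<subseteq> rvec D" unfolding S_def by (auto simp: projD_def rvec_def)
  have tS: "continuous_on S t" using continuous_on_subset[OF t Sr] .
  show ?thesis
  proof (cases "K = {}")
    case True
    have "nn_pre d d (\<lambda>x. x)" by (rule nn_pre.base)
    then show ?thesis using nn_in assms(5) True by (metis empty_iff)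
  next
    case False
    then have Sne: "S \<noteq> {}" unfolding S_def by auto
    have e2: "\<epsilon> / 2 > 0" using assms(5) by simp
    obtain k where k: "good D S k" "\<forall>z\<in>S. \<bar>t z - k z\<bar> < \<epsilon> / 2"
      using approx_all[OF Sc Sr Sne tS e2] by blast
    have cD: "continuous_on K (\<lambda>x::nat\<Rightarrow>real. x D)" by (intro continuous_intros)
    obtain Rk where Rk: "\<forall>x\<in>K. \<bar>x D\<bar> \<le> Rk" using bnd_cont[OF K(1) cD] by blast
    have e4: "\<epsilon> / 4 > 0" using assms(5) by simp
    obtain N where N: "real_ok D S N k Rk (\<epsilon> / 4)" using k(1) e4 unfolding good_def by blast
    define g where "g = affine_map (Suc D) (Suc D) (\<lambda>i j. if i = j then 1 else 0) (\<lambda>_. 0) \<circ> N"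
    have gin: "g \<in> NN_LReLU d" unfolding g_def dD using nn_in N unfolding real_ok_def by blast
    have "\<forall>x \<in> K. \<forall>i < d. \<bar>shear_map d t x i - g x i\<bar> \<le> 3 * \<epsilon> / 4"
    proof (intro ballI allI impI)
      fix x i assume x: "x \<in> K" and i: "i < d"
      have xr: "x \<in> rvec (Suc D)" "projD D x \<in> S" "\<bar>x D\<bar> \<le> Rk" using x K Rk by (auto simp: S_def)
      note A = real_okD[OF N xr]
      have gx: "g x i = N x i" using i dD by (simp add: g_def id_aff)
      have pj: "(\<lambda>j. if j < D then x j else 0) = projD D x" by (simp add: projD_def)
      have sh: "shear_map d t x i = (if i < D then x i else x D + t (projD D x))"
        using i dD by (cases "i < D") (auto simp: shear_map_def pj less_Suc_eq)
      show "\<bar>shear_map d t x i - g x i\<bar> \<le> 3 * \<epsilon> / 4"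
      proof (cases "i < D")
        case True
        then show ?thesis using A(1) sh gx assms(5) by simp
      next
        case False
        then have iD: "i = D" using i dD by simp
        have "\<bar>t (projD D x) - k (projD D x)\<bar> < \<epsilon> / 2" using k(2) xr(2) by blast
        moreover have "shear_map d t x i - g x i = x D + t (projD D x) - N x D" using sh gx iD by simp
        ultimately show ?thesis using A(2) unfolding abs_le_iff abs_less_iff by linarith
      qed
    qed
    moreover have "3 * \<epsilon> / 4 < \<epsilon>" using assms(5) by simp
    ultimately show ?thesis using gin by blast
  qed
qed


end
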